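(* For all integers $n\ge 0$ and $k\ge 1$, $$(k+1)(n+1-k)\,b_n^{(k-1)}=\left(k(k+1)-n-1\right)b_n^{(k)}+k(n+k+2)\,b_n^{(k+1)}.$$
   Context: Let $X(\theta)=1+2\cos\theta$ and, for $k\ge 0$, $\chi_k(\theta)=1+2\sum_{j=1}^{k}\cos(j\theta)$ (the character of the $(k+1)$-dimensional irreducible representation of the Lie algebra $A_1$). For $n\ge 0$ the integers $b_n^{(k)}$, $0\le k\le n$, are the unique coefficients with $X(\theta)^n=\sum_{k=0}^{n}b_n^{(k)}\chi_k(\theta)$ for all real $\theta$; set $b_n^{(k)}=0$ for $k>n$. *)

theory Defs
  imports Complex_Main
begin

definition X :: "real \<Rightarrow> real" where
  "X \<theta> = 1 + 2 * cos \<theta>"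

definition chi :: "nat \<Rightarrow> real \<Rightarrow> real" where
  "chi k \<theta> = 1 + 2 * (\<Sum>j=1..k. cos (real j * \<theta>))"

definition bcoef :: "nat \<Rightarrow> nat \<Rightarrow> int" where
  "bcoef n = (THE c :: nat \<Rightarrow> int. (\<forall>k>n. c k = 0) \<and>
      (\<forall>\<theta>::real. X \<theta> ^ n = (\<Sum>k\<le>n. of_int (c k) * chi k \<theta>)))"

end

theory Submission
  imports Defs
begin


lemma chi_Suc: "chi (Suc k) t = chi k t + 2 * cos (real (Suc k) * t)"
  by (simp add: chi_def algebra_simps)

lemma cos_prod: "2 * cos (a::real) * cos b = cos (a + b) + cos (a - b)"
  by (simp add: cos_add cos_diff)

lemma two_cos_chi: "2 * cos t * chi (Suc k) t = chi k t + chi (Suc (Suc k)) t"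
proof (induction k)
  case 0
  have "cos (2*t) = 2 * (cos t)^2 - 1" by (simp add: cos_double_cos)
  then show ?case by (simp add: chi_def power2_eq_square algebra_simps)
next
  case (Suc k)
  have c: "2 * cos t * cos (real (Suc (Suc k)) * t) = cos (real (Suc (Suc (Suc k))) * t) + cos (real (Suc k) * t)"
    using cos_prod[of "real (Suc (Suc k)) * t" t]
    by (simp add: algebra_simps)
  have "2 * cos t * chi (Suc (Suc k)) t = 2 * cos t * chi (Suc k) t + 2 * (2 * cos t * cos (real (Suc (Suc k)) * t))"
    by (simp add: chi_Suc[of "Suc k"] algebra_simps)
  also have "\<dots> = chi (Suc k) t + chi (Suc (Suc (Suc k))) t"
    using Suc c by (simp add: chi_Suc algebra_simps)
  finally show ?case .
qed

lemma X_chi0: "X t * chi 0 t = chi 1 t" by (simp add: X_def chi_def)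
lemma X_chiS: "X t * chi (Suc k) t = chi k t + chi (Suc k) t + chi (Suc (Suc k)) t"
  using two_cos_chi[of t k] by (simp add: X_def algebra_simps)

definition shift :: "(nat \<Rightarrow> real) \<Rightarrow> nat \<Rightarrow> real" where
  "shift b j = (case j of 0 \<Rightarrow> b 1 | Suc k \<Rightarrow> b k + b (Suc k) + b (Suc (Suc k)))"

lemma shift_sum: "(\<Sum>j\<le>Suc m. shift b j * chi j t) = X t * (\<Sum>k\<le>m. b k * chi k t)
   + b (Suc m) * (chi m t + chi (Suc m) t) + b (Suc (Suc m)) * chi (Suc m) t"
proof (induction m)
  case 0
  then show ?case using X_chi0[of t] by (simp add: shift_def chi_def X_def algebra_simps)
next
  case (Suc m)
  have "(\<Sum>j\<le>Suc (Suc m). shift b j * chi j t) = (\<Sum>j\<le>Suc m. shift b j * chi j t) + shift b (Suc (Suc m)) * chi (Suc (Suc m)) t"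
    by simp
  also have "\<dots> = X t * (\<Sum>k\<le>Suc m. b k * chi k t)
   + b (Suc (Suc m)) * (chi (Suc m) t + chi (Suc (Suc m)) t) + b (Suc (Suc (Suc m))) * chi (Suc (Suc m)) t"
  proof -
    have s: "shift b (Suc (Suc m)) = b (Suc m) + b (Suc (Suc m)) + b (Suc (Suc (Suc m)))"
      by (simp add: shift_def)
    have x: "X t * (\<Sum>k\<le>Suc m. b k * chi k t) = X t * (\<Sum>k\<le>m. b k * chi k t) + b (Suc m) * (X t * chi (Suc m) t)"
      by (simp add: algebra_simps)
    show ?thesis unfolding x s Suc X_chiS by (simp add: algebra_simps)
  qed
  finally show ?case .
qed

fun B :: "nat \<Rightarrow> nat \<Rightarrow> int" where
  "B 0 k = (if k = 0 then 1 else 0)"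
| "B (Suc n) 0 = B n 1"
| "B (Suc n) (Suc k) = B n k + B n (Suc k) + B n (Suc (Suc k))"

lemma B_zero: "k > n \<Longrightarrow> B n k = 0"
proof (induction n arbitrary: k)
  case 0 then show ?case by simp
next
  case (Suc n) then show ?case by (cases k) auto
qed

lemma B_shift: "(\<lambda>j. real_of_int (B (Suc n) j)) = shift (\<lambda>k. real_of_int (B n k))"
  by (rule ext, simp add: shift_def split: nat.split)

lemma B_rep: "X t ^ n = (\<Sum>k\<le>n. real_of_int (B n k) * chi k t)"
proof (induction n)
  case 0 then show ?case by (simp add: chi_def)
next
  case (Suc n)
  have "(\<Sum>k\<le>Suc n. real_of_int (B (Suc n) k) * chi k t) = (\<Sum>k\<le>Suc n. shift (\<lambda>k. real_of_int (B n k)) k * chi k t)"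
    using B_shift[of n] by (metis (no_types))
  also have "\<dots> = X t * (\<Sum>k\<le>n. real_of_int (B n k) * chi k t)"
    using shift_sum[where m=n and b="\<lambda>k. real_of_int (B n k)" and t=t] B_zero[of n "Suc n"] B_zero[of n "Suc (Suc n)"] by simp
  finally show ?case using Suc by simp
qed

lemma deriv_zero:
  assumes "\<And>x. (h has_real_derivative h' x) (at x)" "\<And>x. h x = 0"
  shows "h' x = 0"
proof -
  have "h = (\<lambda>_. 0)" using assms(2) by auto
  then have "((\<lambda>_. 0::real) has_real_derivative h' x) (at x)" using assms(1) by metis
  then show ?thesis using DERIV_const DERIV_unique by blast
qed

lemma cos_indep: "(\<forall>t. (\<Sum>j\<le>n. d j * cos (real j * t)) = 0) \<Longrightarrow> \<forall>j\<le>n. d j = (0::real)"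
proof (induction n arbitrary: d)
  case 0
  then show ?case by auto
next
  case (Suc n)
  let ?f = "\<lambda>t. (\<Sum>j\<le>Suc n. d j * cos (real j * t))"
  let ?f1 = "\<lambda>t. (\<Sum>j\<le>Suc n. - d j * real j * sin (real j * t))"
  let ?f2 = "\<lambda>t. (\<Sum>j\<le>Suc n. - d j * real j * real j * cos (real j * t))"
  have D1: "(?f has_real_derivative ?f1 x) (at x)" for x
    by (intro DERIV_sum) (auto intro!: derivative_eq_intros simp: algebra_simps)
  have D2: "(?f1 has_real_derivative ?f2 x) (at x)" for x
    by (intro DERIV_sum) (auto intro!: derivative_eq_intros simp: algebra_simps)
  have z1: "?f1 x = 0" for x using deriv_zero[OF D1] Suc.prems by blast
  have z2: "?f2 x = 0" for x using deriv_zero[OF D2] z1 by blast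
  have "(\<Sum>j\<le>n. (d j * (real (Suc n) ^ 2 - real j ^ 2)) * cos (real j * t)) = 0" for t
  proof -
    have "(\<Sum>j\<le>Suc n. (d j * (real (Suc n) ^ 2 - real j ^ 2)) * cos (real j * t))
        = real (Suc n) ^ 2 * ?f t + ?f2 t"
      by (simp add: sum_distrib_left sum.distrib[symmetric] algebra_simps power2_eq_square)
    also have "\<dots> = 0" using Suc.prems z2 by simp
    finally show ?thesis by simp
  qed
  then have h: "\<forall>j\<le>n. d j * (real (Suc n) ^ 2 - real j ^ 2) = 0"
    using Suc.IH[of "\<lambda>j. d j * (real (Suc n) ^ 2 - real j ^ 2)"] by blast
  have lo: "\<forall>j\<le>n. d j = 0"
  proof (intro allI impI)
    fix j assume "j \<le> n"
    then have "real j ^ 2 < real (Suc n) ^ 2" by (intro power_strict_mono) auto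
    then show "d j = 0" using h \<open>j \<le> n\<close> by auto
  qed
  have "?f 0 = d (Suc n)" using lo by simp
  moreover have "?f 0 = 0" using Suc.prems by blast
  ultimately have "d (Suc n) = 0" by simp
  then show ?case using lo le_Suc_eq by auto
qed


lemma chi_cos: "chi k t = (\<Sum>j\<le>k. (if j = 0 then 1 else 2) * cos (real j * t))"
proof (induction k)
  case 0 then show ?case by (simp add: chi_def)
next
  case (Suc k)
  have "chi (Suc k) t = chi k t + 2 * cos (real (Suc k) * t)" by (rule chi_Suc)
  also have "\<dots> = (\<Sum>j\<le>Suc k. (if j = 0 then 1 else 2) * cos (real j * t))"
    using Suc by simp
  finally show ?case .
qed

lemma rep_cos: "\<exists>d. (\<forall>t. (\<Sum>k\<le>n. c k * chi k t) = (\<Sum>j\<le>n. d j * cos (real j * t)))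
   \<and> d n = (if n = 0 then c 0 else 2 * c n)"
proof (induction n)
  case 0
  show ?case by (rule exI[of _ "\<lambda>j. c 0"]) (simp add: chi_def)
next
  case (Suc n)
  then obtain d where d: "\<forall>t. (\<Sum>k\<le>n. c k * chi k t) = (\<Sum>j\<le>n. d j * cos (real j * t))" by blast
  define e :: "nat \<Rightarrow> real" where "e j = (if j = 0 then 1 else (2::real))" for j
  define d' where "d' j = (if j \<le> n then d j + c (Suc n) * e j else c (Suc n) * e j)" for j
  have "(\<Sum>k\<le>Suc n. c k * chi k t) = (\<Sum>j\<le>Suc n. d' j * cos (real j * t))" for t
  proof -
    have "(\<Sum>j\<le>Suc n. d' j * cos (real j * t)) = (\<Sum>j\<le>n. d j * cos (real j * t)) + c (Suc n) * (\<Sum>j\<le>Suc n. e j * cos (real j * t))"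
    proof -
      have "(\<Sum>j\<le>n. d' j * cos (real j * t)) = (\<Sum>j\<le>n. d j * cos (real j * t) + c (Suc n) * (e j * cos (real j * t)))"
        by (rule sum.cong) (auto simp: d'_def algebra_simps)
      also have "\<dots> = (\<Sum>j\<le>n. d j * cos (real j * t)) + c (Suc n) * (\<Sum>j\<le>n. e j * cos (real j * t))"
        by (simp only: sum.distrib sum_distrib_left)
      finally have "(\<Sum>j\<le>n. d' j * cos (real j * t)) = (\<Sum>j\<le>n. d j * cos (real j * t)) + c (Suc n) * (\<Sum>j\<le>n. e j * cos (real j * t))" .
      moreover have "d' (Suc n) = c (Suc n) * e (Suc n)" by (simp add: d'_def)
      ultimately show ?thesis by (simp add: algebra_simps)
    qed
    also have "\<dots> = (\<Sum>k\<le>Suc n. c k * chi k t)"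
    proof -
      have "chi (Suc n) t = (\<Sum>j\<le>Suc n. e j * cos (real j * t))"
        unfolding e_def by (rule chi_cos)
      then show ?thesis using d by simp
    qed
    finally show ?thesis by simp
  qed
  moreover have "d' (Suc n) = (if Suc n = 0 then c 0 else 2 * c (Suc n))" by (simp add: d'_def e_def)
  ultimately show ?case by (rule_tac exI[of _ d'], intro conjI allI) blast+
qed


lemma chi_uniq: "(\<forall>t. (\<Sum>k\<le>n. c k * chi k t) = 0) \<Longrightarrow> \<forall>k\<le>n. c k = 0"
proof (induction n)
  case 0 then show ?case by (simp add: chi_def)
next
  case (Suc n)
  obtain d where d: "\<forall>t. (\<Sum>k\<le>Suc n. c k * chi k t) = (\<Sum>j\<le>Suc n. d j * cos (real j * t))"
    and dn0: "d (Suc n) = (if Suc n = 0 then c 0 else 2 * c (Suc n))" using rep_cos[where n="Suc n" and c=c] by blast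
  have dn: "d (Suc n) = 2 * c (Suc n)" using dn0 by simp
  have z: "\<forall>t. (\<Sum>j\<le>Suc n. d j * cos (real j * t)) = 0"
  proof
    fix t show "(\<Sum>j\<le>Suc n. d j * cos (real j * t)) = 0"
      using spec[OF d, of t] spec[OF Suc.prems, of t] by linarith
  qed
  have "\<forall>j\<le>Suc n. d j = 0" using cos_indep[where n="Suc n" and d=d, OF z] .
  then have cz: "c (Suc n) = 0" using dn by auto
  have "\<forall>t. (\<Sum>k\<le>n. c k * chi k t) = 0"
  proof
    fix t
    have "(\<Sum>k\<le>Suc n. c k * chi k t) = (\<Sum>k\<le>n. c k * chi k t) + c (Suc n) * chi (Suc n) t"
      by (simp only: sum.atMost_Suc)
    then show "(\<Sum>k\<le>n. c k * chi k t) = 0" using spec[OF Suc.prems, of t] cz by simp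
  qed
  then have "\<forall>k\<le>n. c k = 0" using Suc.IH by blast
  then show ?case using cz le_Suc_eq by auto
qed

lemma bcoef_B: "bcoef n = B n"
  unfolding bcoef_def
proof (rule the_equality)
  show "(\<forall>k>n. B n k = 0) \<and> (\<forall>t. X t ^ n = (\<Sum>k\<le>n. real_of_int (B n k) * chi k t))"
    using B_zero B_rep by blast
next
  fix c :: "nat \<Rightarrow> int"
  assume a: "(\<forall>k>n. c k = 0) \<and> (\<forall>t. X t ^ n = (\<Sum>k\<le>n. real_of_int (c k) * chi k t))"
  have "\<forall>t. (\<Sum>k\<le>n. real_of_int (c k - B n k) * chi k t) = 0"
    using a B_rep by (simp add: algebra_simps sum_subtractf)
  then have "\<forall>k\<le>n. real_of_int (c k - B n k) = 0" by (rule chi_uniq)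
  note h = this
  show "c = B n"
  proof (rule ext)
    fix k show "c k = B n k"
    proof (cases "k \<le> n")
      case True
      then have "real_of_int (c k - B n k) = 0" using h by blast
      then show ?thesis by simp
    next
      case False
      then show ?thesis using a B_zero[of n k] by simp
    qed
  qed
qed


definition Ef :: "nat \<Rightarrow> nat \<Rightarrow> int" where
  "Ef n k = (int k + 1) * (int n + 1 - int k) * B n (k - 1)
      - (int k * (int k + 1) - int n - 1) * B n k - int k * (int n + int k + 2) * B n (k + 1)"

lemma Ef_step2: "int (Suc (Suc m)) * int (Suc (Suc (Suc m))) * Ef (Suc n) (Suc (Suc m))
  = (int m + 3)^2 * Ef n (Suc m) + ((int m + 2)^2 + int m + 1) * Ef n (Suc (Suc m)) + (int m + 2)^2 * Ef n (Suc (Suc (Suc m)))"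
  by (simp add: Ef_def algebra_simps power2_eq_square)

lemma Ef_step1: "2 * Ef (Suc n) 1 = Ef n 1 + Ef n 2"
  by (simp add: Ef_def algebra_simps numeral_eq_Suc)

lemma Ef_zero: "k \<ge> 1 \<Longrightarrow> Ef n k = 0"
proof (induction n arbitrary: k)
  case 0
  then show ?case by (simp add: Ef_def)
next
  case (Suc n)
  show ?case
  proof (cases "k = 1")
    case True
    then show ?thesis using Ef_step1[of n] Suc.IH[of 1] Suc.IH[of 2] by simp
  next
    case False
    then obtain m where m: "k = Suc (Suc m)" using Suc.prems by (metis Suc_le_D le_antisym not0_implies_Suc One_nat_def)
    have "int (Suc (Suc m)) * int (Suc (Suc (Suc m))) * Ef (Suc n) (Suc (Suc m)) = 0"
      using Ef_step2[of m n] Suc.IH[of "Suc m"] Suc.IH[of "Suc (Suc m)"] Suc.IH[of "Suc (Suc (Suc m))"] by simp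
    then show ?thesis using m by simp
  qed
qed

theorem theorem5:
  fixes n k :: nat
  assumes "k \<ge> 1"
  shows "(int k + 1) * (int n + 1 - int k) * bcoef n (k - 1)
       = (int k * (int k + 1) - int n - 1) * bcoef n k + int k * (int n + int k + 2) * bcoef n (k + 1)"
  using Ef_zero[OF assms, of n] unfolding bcoef_B Ef_def by simp


end
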